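(* Suppose $g(K_a,K_b)<(a-1)(b-1)$ for some positive integers $a$ and $b$. Then there is a constant $\beta<1$ such that $g(n)\le \beta n^2$ for all $n$.
   Context: $K_m$ is the complete graph on $m$ vertices. A complete bipartite subgraph of a graph $G$ has two disjoint nonempty vertex classes $X,Y$ and edge set all $xy$ with $x\in X,y\in Y$ (all edges of $G$). For graphs $G,H$, a block is a set $E(B_1)\times E(B_2)$ where $B_1$ is a complete bipartite subgraph of $G$ and $B_2$ is a complete bipartite subgraph of $H$; $g(G,H)$ is the minimum number of blocks whose union is $E(G)\times E(H)$ with the blocks pairwise disjoint, and $g(n)=g(K_n,K_n)$. *)

theory Defs
  imports Complex_Main
begin

text \<open>A graph is represented by its edge set (a set of 2-element vertex sets).\<close>

definition cbip_edges :: "'a set \<Rightarrow> 'a set \<Rightarrow> 'a set set" where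
  "cbip_edges X Y = {{x, y} | x y. x \<in> X \<and> y \<in> Y}"

definition is_cbip :: "'a set set \<Rightarrow> 'a set set \<Rightarrow> bool" where
  "is_cbip E F \<longleftrightarrow> (\<exists>X Y. X \<noteq> {} \<and> Y \<noteq> {} \<and> X \<inter> Y = {}
      \<and> cbip_edges X Y \<subseteq> E \<and> F = cbip_edges X Y)"

definition is_block :: "'a set set \<Rightarrow> 'b set set \<Rightarrow> ('a set \<times> 'b set) set \<Rightarrow> bool" where
  "is_block E1 E2 B \<longleftrightarrow> (\<exists>F1 F2. is_cbip E1 F1 \<and> is_cbip E2 F2 \<and> B = F1 \<times> F2)"

definition is_block_partition ::
  "'a set set \<Rightarrow> 'b set set \<Rightarrow> ('a set \<times> 'b set) set set \<Rightarrow> bool" where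
  "is_block_partition E1 E2 P \<longleftrightarrow> finite P \<and> (\<forall>B\<in>P. is_block E1 E2 B)
      \<and> pairwise disjnt P \<and> \<Union>P = E1 \<times> E2"

definition gGH :: "'a set set \<Rightarrow> 'b set set \<Rightarrow> nat" where
  "gGH E1 E2 = (LEAST k. \<exists>P. is_block_partition E1 E2 P \<and> card P = k)"

definition K_edges :: "nat \<Rightarrow> nat set set" where
  "K_edges m = {{i, j} | i j. i < m \<and> j < m \<and> i \<noteq> j}"

definition g :: "nat \<Rightarrow> nat" where
  "g n = gGH (K_edges n) (K_edges n)"

end

theory Submission
  imports Defs
begin


definition cov :: "'a set set \<Rightarrow> 'b set set \<Rightarrow> nat \<Rightarrow> bool" where
  "cov E1 E2 k \<longleftrightarrow> (\<exists>P. is_block_partition E1 E2 P \<and> card P \<le> k)"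

definition bp :: "'a set set \<Rightarrow> nat \<Rightarrow> bool" where
  "bp E k \<longleftrightarrow> (\<exists>Q. finite Q \<and> (\<forall>F\<in>Q. is_cbip E F) \<and> pairwise disjnt Q \<and> \<Union>Q = E \<and> card Q \<le> k)"

definition Kset :: "'a set \<Rightarrow> 'a set set" where
  "Kset V = {{i, j} | i j. i \<in> V \<and> j \<in> V \<and> i \<noteq> j}"

lemma cov_g: "cov E1 E2 k \<Longrightarrow> gGH E1 E2 \<le> k"
  unfolding cov_def gGH_def by (metis (mono_tags, lifting) Least_le le_trans)

lemma cov_g_ex: "cov E1 E2 k \<Longrightarrow> cov E1 E2 (gGH E1 E2)"
  unfolding cov_def gGH_def by (rule exE, assumption, rule LeastI2_ex, auto)

lemma cov_mono: "cov E1 E2 k \<Longrightarrow> k \<le> k' \<Longrightarrow> cov E1 E2 k'"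
  unfolding cov_def by auto

lemma cbip_mono: "is_cbip E F \<Longrightarrow> E \<subseteq> E' \<Longrightarrow> is_cbip E' F"
  unfolding is_cbip_def by (metis order_trans)

lemma block_mono: "is_block E1 E2 B \<Longrightarrow> E1 \<subseteq> E1' \<Longrightarrow> E2 \<subseteq> E2' \<Longrightarrow> is_block E1' E2' B"
  unfolding is_block_def using cbip_mono by metis

lemma cov_union1:
  assumes "cov E1 E k1" "cov E1' E k2" "E1 \<inter> E1' = {}"
  shows "cov (E1 \<union> E1') E (k1 + k2)"
proof -
  obtain P1 where P1: "is_block_partition E1 E P1" "card P1 \<le> k1" using assms(1) cov_def by blast
  obtain P2 where P2: "is_block_partition E1' E P2" "card P2 \<le> k2" using assms(2) cov_def by blast
  have f: "finite P1" "finite P2" using P1 P2 is_block_partition_def by auto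
  have "is_block_partition (E1 \<union> E1') E (P1 \<union> P2)"
    unfolding is_block_partition_def
  proof (intro conjI)
    show "finite (P1 \<union> P2)" using f by simp
    show "\<forall>B\<in>P1 \<union> P2. is_block (E1 \<union> E1') E B"
      using P1(1) P2(1) unfolding is_block_partition_def by (meson Un_iff block_mono order_refl sup.cobounded1 sup.cobounded2)
    show "pairwise disjnt (P1 \<union> P2)"
    proof (unfold pairwise_def, intro ballI impI)
      fix x y assume x: "x \<in> P1 \<union> P2" and y: "y \<in> P1 \<union> P2" and "x \<noteq> y"
      have s1: "\<And>B. B \<in> P1 \<Longrightarrow> B \<subseteq> E1 \<times> E" using P1(1) unfolding is_block_partition_def by blast
      have s2: "\<And>B. B \<in> P2 \<Longrightarrow> B \<subseteq> E1' \<times> E" using P2(1) unfolding is_block_partition_def by blast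
      have d: "disjnt (E1 \<times> E) (E1' \<times> E)" using assms(3) unfolding disjnt_def by auto
      have p1: "pairwise disjnt P1" using P1(1) unfolding is_block_partition_def by blast
      have p2: "pairwise disjnt P2" using P2(1) unfolding is_block_partition_def by blast
      show "disjnt x y"
      proof (cases "x \<in> P1")
        case True
        show ?thesis
        proof (cases "y \<in> P1")
          case True
          then show ?thesis using \<open>x \<in> P1\<close> \<open>x \<noteq> y\<close> p1 unfolding pairwise_def by blast
        next
          case False
          then have "y \<in> P2" using y by blast
          then show ?thesis using s1[OF \<open>x \<in> P1\<close>] s2[of y] d unfolding disjnt_def by blast
        qed
      next
        case False
        then have "x \<in> P2" using x by blast
        show ?thesis
        proof (cases "y \<in> P2")
          case True
          then show ?thesis using \<open>x \<in> P2\<close> \<open>x \<noteq> y\<close> p2 unfolding pairwise_def by blast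
        next
          case False
          then have "y \<in> P1" using y by blast
          then show ?thesis using s2[OF \<open>x \<in> P2\<close>] s1[of y] d unfolding disjnt_def by blast
        qed
      qed
    qed
    show "\<Union>(P1 \<union> P2) = (E1 \<union> E1') \<times> E"
      using P1(1) P2(1) unfolding is_block_partition_def by auto
  qed
  moreover have "card (P1 \<union> P2) \<le> k1 + k2" using P1(2) P2(2) card_Un_le[of P1 P2] by linarith
  ultimately show ?thesis unfolding cov_def by blast
qed

lemma cov_union2:
  assumes "cov E E1 k1" "cov E E1' k2" "E1 \<inter> E1' = {}"
  shows "cov E (E1 \<union> E1') (k1 + k2)"
proof -
  obtain P1 where P1: "is_block_partition E E1 P1" "card P1 \<le> k1" using assms(1) cov_def by blast
  obtain P2 where P2: "is_block_partition E E1' P2" "card P2 \<le> k2" using assms(2) cov_def by blast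
  have f: "finite P1" "finite P2" using P1 P2 is_block_partition_def by auto
  have "is_block_partition E (E1 \<union> E1') (P1 \<union> P2)"
    unfolding is_block_partition_def
  proof (intro conjI)
    show "finite (P1 \<union> P2)" using f by simp
    show "\<forall>B\<in>P1 \<union> P2. is_block E (E1 \<union> E1') B"
      using P1(1) P2(1) unfolding is_block_partition_def by (meson Un_iff block_mono order_refl sup.cobounded1 sup.cobounded2)
    show "pairwise disjnt (P1 \<union> P2)"
    proof (unfold pairwise_def, intro ballI impI)
      fix x y assume x: "x \<in> P1 \<union> P2" and y: "y \<in> P1 \<union> P2" and "x \<noteq> y"
      have s1: "\<And>B. B \<in> P1 \<Longrightarrow> B \<subseteq> E \<times> E1" using P1(1) unfolding is_block_partition_def by blast
      have s2: "\<And>B. B \<in> P2 \<Longrightarrow> B \<subseteq> E \<times> E1'" using P2(1) unfolding is_block_partition_def by blast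
      have d: "disjnt (E \<times> E1) (E \<times> E1')" using assms(3) unfolding disjnt_def by auto
      have p1: "pairwise disjnt P1" using P1(1) unfolding is_block_partition_def by blast
      have p2: "pairwise disjnt P2" using P2(1) unfolding is_block_partition_def by blast
      show "disjnt x y"
      proof (cases "x \<in> P1")
        case True
        show ?thesis
        proof (cases "y \<in> P1")
          case True
          then show ?thesis using \<open>x \<in> P1\<close> \<open>x \<noteq> y\<close> p1 unfolding pairwise_def by blast
        next
          case False
          then have "y \<in> P2" using y by blast
          then show ?thesis using s1[OF \<open>x \<in> P1\<close>] s2[of y] d unfolding disjnt_def by blast
        qed
      next
        case False
        then have "x \<in> P2" using x by blast
        show ?thesis
        proof (cases "y \<in> P2")
          case True
          then show ?thesis using \<open>x \<in> P2\<close> \<open>x \<noteq> y\<close> p2 unfolding pairwise_def by blast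
        next
          case False
          then have "y \<in> P1" using y by blast
          then show ?thesis using s2[OF \<open>x \<in> P2\<close>] s1[of y] d unfolding disjnt_def by blast
        qed
      qed
    qed
    show "\<Union>(P1 \<union> P2) = E \<times> (E1 \<union> E1')"
      using P1(1) P2(1) unfolding is_block_partition_def by auto
  qed
  moreover have "card (P1 \<union> P2) \<le> k1 + k2" using P1(2) P2(2) card_Un_le[of P1 P2] by linarith
  ultimately show ?thesis unfolding cov_def by blast
qed

lemma cov_empty1: "cov {} E 0"
  unfolding cov_def is_block_partition_def by (rule exI[of _ "{}"]) auto

lemma cov_empty2: "cov E {} 0"
  unfolding cov_def is_block_partition_def by (rule exI[of _ "{}"]) auto



lemma cov_prod:
  assumes "bp E1 k1" "bp E2 k2"
  shows "cov E1 E2 (k1 * k2)"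
proof -
  obtain Q1 where Q1: "finite Q1" "\<forall>F\<in>Q1. is_cbip E1 F" "pairwise disjnt Q1" "\<Union>Q1 = E1" "card Q1 \<le> k1"
    using assms(1) unfolding bp_def by blast
  obtain Q2 where Q2: "finite Q2" "\<forall>F\<in>Q2. is_cbip E2 F" "pairwise disjnt Q2" "\<Union>Q2 = E2" "card Q2 \<le> k2"
    using assms(2) unfolding bp_def by blast
  define P where "P = (\<lambda>(F1, F2). F1 \<times> F2) ` (Q1 \<times> Q2)"
  have "is_block_partition E1 E2 P"
    unfolding is_block_partition_def
  proof (intro conjI)
    show "finite P" unfolding P_def using Q1(1) Q2(1) by simp
    show "\<forall>B\<in>P. is_block E1 E2 B"
      unfolding P_def is_block_def using Q1(2) Q2(2) by auto
    show "pairwise disjnt P"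
    proof (unfold pairwise_def, intro ballI impI)
      fix x y assume x: "x \<in> P" and y: "y \<in> P" and ne: "x \<noteq> y"
      obtain A1 A2 where A: "A1 \<in> Q1" "A2 \<in> Q2" "x = A1 \<times> A2" using x unfolding P_def by auto
      obtain B1 B2 where B: "B1 \<in> Q1" "B2 \<in> Q2" "y = B1 \<times> B2" using y unfolding P_def by auto
      have "A1 \<noteq> B1 \<or> A2 \<noteq> B2" using A B ne by auto
      then have "disjnt A1 B1 \<or> disjnt A2 B2"
        using A B Q1(3) Q2(3) unfolding pairwise_def by blast
      then show "disjnt x y" using A B unfolding disjnt_def by auto
    qed
    show "\<Union>P = E1 \<times> E2"
      unfolding P_def using Q1(4) Q2(4) by auto
  qed
  moreover have "card P \<le> k1 * k2"
  proof -
    have "card P \<le> card (Q1 \<times> Q2)" unfolding P_def by (rule card_image_le) (simp add: Q1(1) Q2(1))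
    also have "\<dots> = card Q1 * card Q2" by (simp add: card_cartesian_product)
    also have "\<dots> \<le> k1 * k2" using Q1(5) Q2(5) by (simp add: mult_le_mono)
    finally show ?thesis .
  qed
  ultimately show ?thesis unfolding cov_def by blast
qed

lemma Kset_single: "Kset {x} = {}"
  unfolding Kset_def by auto

lemma Kset_union:
  assumes "U \<inter> W = {}"
  shows "Kset (U \<union> W) = (Kset U \<union> Kset W) \<union> cbip_edges U W"
  using assms unfolding Kset_def cbip_edges_def by (auto, blast+)

lemma Kset_disj:
  assumes "U \<inter> W = {}"
  shows "Kset U \<inter> Kset W = {}" "(Kset U \<union> Kset W) \<inter> cbip_edges U W = {}"
  using assms unfolding Kset_def cbip_edges_def by (auto simp: doubleton_eq_iff)

lemma cbip_Kset:
  assumes "U \<inter> W = {}" "U \<noteq> {}" "W \<noteq> {}"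
  shows "is_cbip (Kset (U \<union> W)) (cbip_edges U W)"
  unfolding is_cbip_def
  by (rule exI[of _ U], rule exI[of _ W]) (use assms Kset_union[OF assms(1)] in auto)

lemma bp_cbip:
  assumes "U \<inter> W = {}" "U \<noteq> {}" "W \<noteq> {}"
  shows "bp (cbip_edges U W) 1"
  unfolding bp_def
proof (rule exI[of _ "{cbip_edges U W}"], intro conjI)
  show "\<forall>F\<in>{cbip_edges U W}. is_cbip (cbip_edges U W) F"
    unfolding is_cbip_def using assms by auto
qed auto



lemma Kset_mono: "U \<subseteq> W \<Longrightarrow> Kset U \<subseteq> Kset W"
  unfolding Kset_def by blast

lemma bp_K:
  assumes "finite V" "V \<noteq> {}"
  shows "bp (Kset V) (card V - 1)"
  using assms
proof (induction V rule: finite_ne_induct)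
  case (singleton x)
  then show ?case unfolding bp_def Kset_single by (rule_tac exI[of _ "{}"]) auto
next
  case (insert x F)
  obtain Q where Q: "finite Q" "\<forall>G\<in>Q. is_cbip (Kset F) G" "pairwise disjnt Q" "\<Union>Q = Kset F" "card Q \<le> card F - 1"
    using insert.IH unfolding bp_def by blast
  have dj: "F \<inter> {x} = {}" using insert.hyps by auto
  have ins: "insert x F = F \<union> {x}" by auto
  have KU: "Kset (insert x F) = Kset F \<union> cbip_edges F {x}"
    unfolding ins Kset_union[OF dj] Kset_single by simp
  have D: "Kset F \<inter> cbip_edges F {x} = {}" using Kset_disj(2)[OF dj] by auto
  define Q' where "Q' = insert (cbip_edges F {x}) Q"
  have "finite Q'" unfolding Q'_def using Q(1) by simp
  moreover have "\<forall>G\<in>Q'. is_cbip (Kset (insert x F)) G"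
  proof
    fix G assume "G \<in> Q'"
    then consider "G = cbip_edges F {x}" | "G \<in> Q" unfolding Q'_def by blast
    then show "is_cbip (Kset (insert x F)) G"
    proof cases
      case 1
      have "is_cbip (Kset (F \<union> {x})) (cbip_edges F {x})"
        by (rule cbip_Kset[OF dj]) (use insert.hyps in auto)
      then show ?thesis unfolding 1 ins .
    next
      case 2
      then show ?thesis using Q(2) cbip_mono Kset_mono[of F "insert x F"] by blast
    qed
  qed
  moreover have "pairwise disjnt Q'"
    unfolding Q'_def pairwise_insert
  proof (intro conjI)
    show "pairwise disjnt Q" by (rule Q(3))
    show "\<forall>y. y \<in> Q \<and> y \<noteq> cbip_edges F {x} \<longrightarrow> disjnt (cbip_edges F {x}) y \<and> disjnt y (cbip_edges F {x})"
    proof (intro allI impI)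
      fix y assume "y \<in> Q \<and> y \<noteq> cbip_edges F {x}"
      then have "y \<subseteq> Kset F" using Q(4) by blast
      then show "disjnt (cbip_edges F {x}) y \<and> disjnt y (cbip_edges F {x})"
        using D unfolding disjnt_def by blast
    qed
  qed
  moreover have "\<Union>Q' = Kset (insert x F)" unfolding Q'_def KU using Q(4) by auto
  moreover have "card Q' \<le> card (insert x F) - 1"
  proof -
    have "card Q' \<le> card Q + 1" unfolding Q'_def using Q(1) by (simp add: card_insert_if)
    moreover have "card F \<ge> 1" using insert.hyps by (simp add: Suc_leI card_gt_0_iff)
    ultimately show ?thesis using Q(5) insert.hyps by simp
  qed
  ultimately show ?case unfolding bp_def by (intro exI[of _ Q']) simp
qed

lemma cbip_image:
  assumes "inj f"
  shows "(\<lambda>e. f ` e) ` cbip_edges X Y = cbip_edges (f ` X) (f ` Y)"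
  unfolding cbip_edges_def by (auto simp: image_def)

lemma cbip_transport:
  assumes "inj f" "is_cbip E F"
  shows "is_cbip ((\<lambda>e. f ` e) ` E) ((\<lambda>e. f ` e) ` F)"
proof -
  obtain X Y where XY: "X \<noteq> {}" "Y \<noteq> {}" "X \<inter> Y = {}" "cbip_edges X Y \<subseteq> E" "F = cbip_edges X Y"
    using assms(2) unfolding is_cbip_def by blast
  show ?thesis unfolding is_cbip_def
  proof (rule exI[of _ "f ` X"], rule exI[of _ "f ` Y"], intro conjI)
    show "f ` X \<noteq> {}" "f ` Y \<noteq> {}" using XY by auto
    show "f ` X \<inter> f ` Y = {}" using XY image_Int[OF assms(1), of X Y] by simp
    show "cbip_edges (f ` X) (f ` Y) \<subseteq> (`) f ` E"
      using image_mono[OF XY(4), of "(`) f"] cbip_image[OF assms(1)] by simp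
    show "(`) f ` F = cbip_edges (f ` X) (f ` Y)" using XY(5) cbip_image[OF assms(1)] by simp
  qed
qed



lemma inj_imgf: "inj f \<Longrightarrow> inj (\<lambda>e. f ` e)"
  by (simp add: inj_def inj_image_eq_iff)

lemma cov_transport:
  assumes "cov E1 E2 k" "inj f" "inj h"
  shows "cov ((\<lambda>e. f ` e) ` E1) ((\<lambda>e. h ` e) ` E2) k"
proof -
  obtain P where P: "is_block_partition E1 E2 P" "card P \<le> k" using assms(1) cov_def by blast
  define \<phi> where "\<phi> = map_prod (\<lambda>e. f ` e) (\<lambda>e. h ` e)"
  have injp: "inj \<phi>" unfolding \<phi>_def using map_prod_inj_on[OF inj_imgf[OF assms(2)] inj_imgf[OF assms(3)]] by simp
  define P' where "P' = (\<lambda>B. \<phi> ` B) ` P"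
  have img: "\<And>A B. \<phi> ` (A \<times> B) = ((\<lambda>e. f ` e) ` A) \<times> ((\<lambda>e. h ` e) ` B)"
    unfolding \<phi>_def by (rule map_prod_surj_on) auto
  have "is_block_partition ((\<lambda>e. f ` e) ` E1) ((\<lambda>e. h ` e) ` E2) P'"
    unfolding is_block_partition_def
  proof (intro conjI)
    show "finite P'" unfolding P'_def using P(1) is_block_partition_def by auto
    show "\<forall>B\<in>P'. is_block ((\<lambda>e. f ` e) ` E1) ((\<lambda>e. h ` e) ` E2) B"
    proof
      fix B' assume "B' \<in> P'"
      then obtain B where B: "B \<in> P" "B' = \<phi> ` B" unfolding P'_def by blast
      then obtain F1 F2 where F: "is_cbip E1 F1" "is_cbip E2 F2" "B = F1 \<times> F2"
        using P(1) unfolding is_block_partition_def is_block_def by blast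
      show "is_block ((\<lambda>e. f ` e) ` E1) ((\<lambda>e. h ` e) ` E2) B'"
        unfolding is_block_def B(2) F(3) img
        using cbip_transport[OF assms(2) F(1)] cbip_transport[OF assms(3) F(2)] by blast
    qed
    show "pairwise disjnt P'"
    proof (unfold pairwise_def, intro ballI impI)
      fix x y assume "x \<in> P'" "y \<in> P'" "x \<noteq> y"
      then obtain A B where AB: "A \<in> P" "B \<in> P" "x = \<phi> ` A" "y = \<phi> ` B" "A \<noteq> B"
        unfolding P'_def by blast
      then have "disjnt A B" using P(1) unfolding is_block_partition_def pairwise_def by blast
      then show "disjnt x y" unfolding AB(3,4) disjnt_def using injp
        by (simp add: image_Int[symmetric])
    qed
    show "\<Union>P' = ((\<lambda>e. f ` e) ` E1) \<times> ((\<lambda>e. h ` e) ` E2)"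
    proof -
      have "\<Union>P' = \<phi> ` \<Union>P" unfolding P'_def by auto
      also have "\<dots> = \<phi> ` (E1 \<times> E2)" using P(1) unfolding is_block_partition_def by simp
      finally show ?thesis using img by simp
    qed
  qed
  moreover have "card P' \<le> k"
    using P card_image_le[of P "\<lambda>B. \<phi> ` B"] unfolding P'_def is_block_partition_def by simp
  ultimately show ?thesis unfolding cov_def by blast
qed

lemma Kset_image: "inj f \<Longrightarrow> (\<lambda>e. f ` e) ` Kset V = Kset (f ` V)"
  unfolding Kset_def inj_def by (auto simp: image_def)

lemma K_edges_Kset: "K_edges n = Kset {0..<n}"
  unfolding K_edges_def Kset_def by auto

lemma shift_interval: "(\<lambda>i. p + i) ` {0..<(a::nat)} = {p..<p+a}"
  by (simp add: image_add_atLeastLessThan add.commute)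



definition Qs :: "'a set \<Rightarrow> 'b set \<Rightarrow> nat \<Rightarrow> bool" where
  "Qs V W s \<longleftrightarrow> (\<exists>k. cov (Kset V) (Kset W) k \<and> k + s \<le> (card V - 1) * (card W - 1))"

lemma Qs_mono: "Qs V W s \<Longrightarrow> s' \<le> s \<Longrightarrow> Qs V W s'"
  unfolding Qs_def by fastforce

lemma Qs_base:
  assumes "finite V" "V \<noteq> {}" "finite W" "W \<noteq> {}"
  shows "Qs V W 0"
  unfolding Qs_def using cov_prod[OF bp_K[OF assms(1,2)] bp_K[OF assms(3,4)]] by auto

lemma Qs_stepW:
  assumes "finite V" "V \<noteq> {}" "finite W" "W \<noteq> {}" "finite B" "B \<noteq> {}" "W \<inter> B = {}"
    and "Qs V W s1" "Qs V B s2"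
  shows "Qs V (W \<union> B) (s1 + s2)"
proof -
  obtain k1 where k1: "cov (Kset V) (Kset W) k1" "k1 + s1 \<le> (card V - 1) * (card W - 1)"
    using assms(8) Qs_def by blast
  obtain k2 where k2: "cov (Kset V) (Kset B) k2" "k2 + s2 \<le> (card V - 1) * (card B - 1)"
    using assms(9) Qs_def by blast
  have c3: "cov (Kset V) (cbip_edges W B) ((card V - 1) * 1)"
    using cov_prod[OF bp_K[OF assms(1,2)] bp_cbip[OF assms(7,4,6)]] .
  have "cov (Kset V) ((Kset W \<union> Kset B) \<union> cbip_edges W B) ((k1 + k2) + (card V - 1) * 1)"
    by (rule cov_union2[OF cov_union2[OF k1(1) k2(1) Kset_disj(1)[OF assms(7)]] c3 Kset_disj(2)[OF assms(7)]])
  then have cv: "cov (Kset V) (Kset (W \<union> B)) (k1 + k2 + (card V - 1))"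
    using Kset_union[OF assms(7)] by simp
  have cWB: "card (W \<union> B) = card W + card B" using assms card_Un_disjoint by blast
  have "card W \<ge> 1" "card B \<ge> 1" using assms by (auto simp: Suc_le_eq card_gt_0_iff)
  then obtain w b where wb: "card W = Suc w" "card B = Suc b" by (metis Suc_pred One_nat_def less_eq_Suc_le)
  have "k1 + k2 + (card V - 1) + (s1 + s2) \<le> (card V - 1) * (card (W \<union> B) - 1)"
  proof -
    obtain u where u: "card V = Suc u" using assms(1,2) by (metis card_gt_0_iff Suc_pred)
    show ?thesis using k1(2) k2(2) unfolding cWB wb u by (simp add: algebra_simps)
  qed
  then show ?thesis unfolding Qs_def using cv by blast
qed

lemma Qs_stepV:
  assumes "finite V" "V \<noteq> {}" "finite W" "W \<noteq> {}" "finite A" "A \<noteq> {}" "V \<inter> A = {}"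
    and "Qs V W s1" "Qs A W s2"
  shows "Qs (V \<union> A) W (s1 + s2)"
proof -
  obtain k1 where k1: "cov (Kset V) (Kset W) k1" "k1 + s1 \<le> (card V - 1) * (card W - 1)"
    using assms(8) Qs_def by blast
  obtain k2 where k2: "cov (Kset A) (Kset W) k2" "k2 + s2 \<le> (card A - 1) * (card W - 1)"
    using assms(9) Qs_def by blast
  have c3: "cov (cbip_edges V A) (Kset W) (1 * (card W - 1))"
    using cov_prod[OF bp_cbip[OF assms(7,2,6)] bp_K[OF assms(3,4)]] .
  have "cov ((Kset V \<union> Kset A) \<union> cbip_edges V A) (Kset W) ((k1 + k2) + 1 * (card W - 1))"
    by (rule cov_union1[OF cov_union1[OF k1(1) k2(1) Kset_disj(1)[OF assms(7)]] c3 Kset_disj(2)[OF assms(7)]])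
  then have cv: "cov (Kset (V \<union> A)) (Kset W) (k1 + k2 + (card W - 1))"
    using Kset_union[OF assms(7)] by simp
  have cVA: "card (V \<union> A) = card V + card A" using assms card_Un_disjoint by blast
  have "card V \<ge> 1" "card A \<ge> 1" using assms by (auto simp: Suc_le_eq card_gt_0_iff)
  then obtain v w where wb: "card V = Suc v" "card A = Suc w" by (metis Suc_pred One_nat_def less_eq_Suc_le)
  have "k1 + k2 + (card W - 1) + (s1 + s2) \<le> (card (V \<union> A) - 1) * (card W - 1)"
  proof -
    obtain u where u: "card W = Suc u" using assms(3,4) by (metis card_gt_0_iff Suc_pred)
    show ?thesis using k1(2) k2(2) unfolding cVA wb u by (simp add: algebra_simps)
  qed
  then show ?thesis unfolding Qs_def using cv by blast
qed



lemma Qs_hyp: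
  assumes "0 < a" "0 < b" "gGH (K_edges a) (K_edges b) < (a - 1) * (b - 1)"
  shows "Qs {p..<p+a} {q..<q+(b::nat)} 1"
proof -
  have "cov (K_edges a) (K_edges b) ((a - 1) * (b - 1))"
    unfolding K_edges_Kset using cov_prod[OF bp_K[of "{0..<a}"] bp_K[of "{0..<b}"]] assms by simp
  then have c: "cov (Kset {0..<a}) (Kset {0..<b}) (gGH (K_edges a) (K_edges b))"
    using cov_g_ex K_edges_Kset by metis
  have ip: "inj (\<lambda>i::nat. p + i)" "inj (\<lambda>i::nat. q + i)" by (auto simp: inj_def)
  have "cov (Kset {p..<p+a}) (Kset {q..<q+b}) (gGH (K_edges a) (K_edges b))"
    using cov_transport[OF c ip] unfolding Kset_image[OF ip(1)] Kset_image[OF ip(2)] shift_interval .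
  then show ?thesis unfolding Qs_def using assms(3) by (intro exI[of _ "gGH (K_edges a) (K_edges b)"]) simp
qed

lemma ivl_un: "(m::nat) \<le> n \<Longrightarrow> n \<le> r \<Longrightarrow> {m..<n} \<union> {n..<r} = {m..<r}"
  by auto

lemma L1:
  assumes "0 < a" "0 < b" "gGH (K_edges a) (K_edges b) < (a - 1) * (b - 1)"
  shows "Qs {p..<p+a} {0..<1+k*b} k"
proof (induction k)
  case 0
  then show ?case using Qs_base[of "{p..<p+a}" "{0..<1::nat}"] assms by simp
next
  case (Suc k)
  have "Qs {p..<p+a} ({0..<1+k*b} \<union> {1+k*b..<1+k*b+b}) (k + 1)"
    by (rule Qs_stepW[OF _ _ _ _ _ _ _ Suc.IH Qs_hyp[OF assms]]) (use assms in auto)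
  moreover have "{0..<1+k*b} \<union> {1+k*b..<1+k*b+b} = {0..<1+k*b+b}"
    by (rule ivl_un) auto
  moreover have "1+k*b+b = 1 + Suc k * b" by simp
  ultimately show ?case by (metis Suc_eq_plus1)
qed

lemma L2:
  assumes "0 < a" "0 < b" "gGH (K_edges a) (K_edges b) < (a - 1) * (b - 1)"
  shows "Qs {0..<1+j*a} {0..<1+k*b} (j*k)"
proof (induction j)
  case 0
  then show ?case using Qs_base[of "{0..<1::nat}" "{0..<1+k*b}"] by simp
next
  case (Suc j)
  have "Qs ({0..<1+j*a} \<union> {1+j*a..<1+j*a+a}) {0..<1+k*b} (j*k + k)"
    by (rule Qs_stepV[OF _ _ _ _ _ _ _ Suc.IH L1[OF assms]]) (use assms in auto)
  moreover have "{0..<1+j*a} \<union> {1+j*a..<1+j*a+a} = {0..<1+j*a+a}"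
    by (rule ivl_un) auto
  moreover have "1+j*a+a = 1 + Suc j * a" by simp
  ultimately show ?case by (simp add: add.commute)
qed

lemma L3:
  fixes t :: nat
  assumes "1 \<le> n" "Qs {0..<n} W s" "finite W" "W \<noteq> {}"
  shows "Qs {0..<n+t} W s"
proof (induction t)
  case 0
  then show ?case using assms by simp
next
  case (Suc t)
  have "Qs ({0..<n+t} \<union> {n+t}) W (s + 0)"
    by (rule Qs_stepV[OF _ _ _ _ _ _ _ Suc.IH Qs_base]) (use assms in auto)
  moreover have "{0..<n+t} \<union> {n+t} = {0..<n + Suc t}" by auto
  ultimately show ?case by simp
qed

lemma L4:
  fixes t :: nat
  assumes "1 \<le> n" "Qs V {0..<n} s" "finite V" "V \<noteq> {}"
  shows "Qs V {0..<n+t} s"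
proof (induction t)
  case 0
  then show ?case using assms by simp
next
  case (Suc t)
  have "Qs V ({0..<n+t} \<union> {n+t}) (s + 0)"
    by (rule Qs_stepW[OF _ _ _ _ _ _ _ Suc.IH Qs_base]) (use assms in auto)
  moreover have "{0..<n+t} \<union> {n+t} = {0..<n + Suc t}" by auto
  ultimately show ?case by simp
qed

lemma g_bound:
  assumes "0 < a" "0 < b" "gGH (K_edges a) (K_edges b) < (a - 1) * (b - 1)"
    and "1 \<le> N" "j * a \<le> N - 1" "k * b \<le> N - 1"
  shows "g N + j * k \<le> (N - 1) * (N - 1)"
proof -
  have q: "Qs {0..<1+j*a} {0..<1+k*b} (j*k)" by (rule L2[OF assms(1-3)])
  have "Qs {0..<1+j*a + (N - (1+j*a))} {0..<1+k*b} (j*k)" by (rule L3[OF _ q]) auto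
  then have "Qs {0..<N} {0..<1+k*b} (j*k)" using assms by simp
  then have "Qs {0..<N} {0..<1+k*b + (N - (1+k*b))} (j*k)" by (rule L4[rotated]) (use assms in auto)
  then have "Qs {0..<N} {0..<N} (j*k)" using assms by simp
  then obtain c where "cov (K_edges N) (K_edges N) c" "c + j*k \<le> (N-1)*(N-1)"
    unfolding Qs_def K_edges_Kset by auto
  then show ?thesis unfolding g_def using cov_g by fastforce
qed



lemma real_ineq:
  fixes G n1 q m :: real
  assumes h1: "G + q*q \<le> n1*n1" and h2: "n1 + 1 \<le> m*(q+1)" and h3: "q \<le> n1"
    and "1 \<le> m" "0 \<le> q"
  shows "G \<le> (1 - 1/(4*m^2)) * (n1+1)^2"
proof -
  have m0: "0 < m" using assms by simp
  have "(n1+1)^2 \<le> (m*(q+1))^2" using h2 assms by (intro power_mono) auto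
  also have "\<dots> = m^2 * (q*q + 2*q + 1)" by (simp add: power2_eq_square algebra_simps)
  also have "\<dots> \<le> m^2 * (4*(q*q + 2*n1 + 1))"
  proof -
    have qq: "0 \<le> q*q" using assms(5) by simp
    have "q*q + 2*q + 1 \<le> 4*(q*q + 2*n1 + 1)" using h3 assms(5) qq by (smt (verit))
    then show ?thesis by (intro mult_left_mono) auto
  qed
  finally have A: "(n1+1)^2 \<le> 4*m^2 * (q*q + 2*n1 + 1)" by (simp add: algebra_simps)
  have "4*m^2 * G \<le> 4*m^2 * (n1*n1 - q*q)" using h1 by (intro mult_left_mono) auto
  also have "\<dots> = 4*m^2 * (n1+1)^2 - 4*m^2*(q*q + 2*n1 + 1)" by (simp add: power2_eq_square algebra_simps)
  also have "\<dots> \<le> 4*m^2 * (n1+1)^2 - (n1+1)^2" using A by simp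
  finally have B: "4*m^2 * G \<le> 4*m^2 * (n1+1)^2 - (n1+1)^2" .
  have "(1 - 1/(4*m^2)) * (n1+1)^2 = (4*m^2 * (n1+1)^2 - (n1+1)^2) / (4*m^2)"
    using m0 by (simp add: field_simps)
  moreover have "G \<le> (4*m^2 * (n1+1)^2 - (n1+1)^2) / (4*m^2)"
  proof -
    have p: "0 < 4*m^2" using m0 by simp
    show ?thesis using B by (subst pos_le_divide_eq[OF p]) (simp add: mult.commute)
  qed
  ultimately show ?thesis by simp
qed

theorem mainTheorem4:
  fixes a b :: nat
  assumes "0 < a" and "0 < b"
    and "gGH (K_edges a) (K_edges b) < (a - 1) * (b - 1)"
  shows "\<exists>\<beta>::real. \<beta> < 1 \<and> (\<forall>n::nat. real (g n) \<le> \<beta> * (real n)^2)"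
proof -
  define m where "m = max a b"
  have m1: "1 \<le> m" using assms m_def by simp
  show ?thesis
  proof (intro exI[of _ "1 - 1/(4*(real m)^2)"] conjI allI)
    show "1 - 1/(4*(real m)^2) < 1" using m1 by simp
    fix N :: nat
    show "real (g N) \<le> (1 - 1/(4*(real m)^2)) * (real N)^2"
    proof (cases "N = 0")
      case True
      have "g 0 \<le> 0" unfolding g_def
        by (rule cov_g) (simp add: K_edges_def cov_empty1)
      then show ?thesis using True by simp
    next
      case False
      define q where "q = (N - 1) div m"
      have qm: "q * m \<le> N - 1" unfolding q_def by (simp add: div_times_less_eq_dividend)
      have qa: "q * a \<le> N - 1" using qm m_def by (meson le_trans max.cobounded1 mult_le_mono2)
      have qb: "q * b \<le> N - 1" using qm m_def by (meson le_trans max.cobounded2 mult_le_mono2)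
      have gb: "g N + q * q \<le> (N - 1) * (N - 1)"
        by (rule g_bound[OF assms]) (use False qa qb in auto)
      have lt: "N - 1 < m * (q + 1)" unfolding q_def using m1
        by (metis add.commute div_mult_mod_eq mod_less_divisor mult.commute mult_Suc_right nat_add_left_cancel_less not_one_le_zero plus_1_eq_Suc zero_less_iff_neq_zero)
      have qle: "q \<le> N - 1" using qm m1 by (metis le_trans mult_le_mono2 mult.right_neutral)
      have r: "real (g N) \<le> (1 - 1/(4*(real m)^2)) * (real (N-1) + 1)^2"
      proof (rule real_ineq[where q = "real q"])
        show "real (g N) + real q * real q \<le> real (N-1) * real (N-1)"
          using gb by (metis of_nat_add of_nat_le_iff of_nat_mult)
        show "real (N-1) + 1 \<le> real m * (real q + 1)" using lt by (metis Suc_leI of_nat_1 of_nat_Suc of_nat_add of_nat_le_iff of_nat_mult add.commute)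
        show "real q \<le> real (N-1)" using qle by simp
        show "1 \<le> real m" using m1 by simp
        show "0 \<le> real q" by simp
      qed
      moreover have "real (N-1) + 1 = real N" using False by simp
      ultimately show ?thesis by simp
    qed
  qed
qed

end
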